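(* Assume $c_1c_2<1$ (in addition to $a_ia_j<1$, $a_ic_1<1$, $a_ic_2<1$). Let $\mathcal P$ be the horizontal path with vertices $(k+j,k)$, $0\le j\le N$, and labels $\boldsymbol b=(b_1,\dots,b_N)$, $b_j=a_{k+j}$. Then the probability mass function $\mathrm P^{\mathcal P}$ on $\mathbb Z^N$ coincides with $\mathrm P^{\boldsymbol b,c_1,c_2}_{\mathrm{stat\,Geo}}$.
   Context: Parameters: $N\ge1$, $a_1,\dots,a_N\in(0,1)$, $c_1,c_2>0$, indices of $a$ taken mod $N$. For the horizontal path, for $\boldsymbol\lambda=(\lambda_i^{(j)})_{i\in\{1,2\},0\le j\le N}\in\mathbb Z^{2N+2}$ define $$\mathrm{wt}^{\mathcal{GP}}(\boldsymbol\lambda)=c_1^{\lambda_1^{(0)}-\lambda_2^{(0)}}c_2^{\lambda_1^{(N)}-\lambda_2^{(N)}}\prod_{j=1}^N\Big[\prod_{i=1}^2b_j^{\lambda_i^{(j)}-\lambda_i^{(j-1)}}\mathbf 1\{\lambda_i^{(j)}\ge\lambda_i^{(j-1)}\}\Big]\mathbf 1\{\lambda_1^{(j-1)}\ge\lambda_2^{(j)}\},$$ $\mathrm{wt}^{\mathcal P}(\boldsymbol\lambda_1)=\sum_{\boldsymbol\lambda_2\in\mathbb Z^{N+1}}\mathrm{wt}^{\mathcal{GP}}(\boldsymbol\lambda_1,\boldsymbol\lambda_2)$, $Z=\sum_{\lambda_1^{(1)},\dots,\lambda_1^{(N)}\in\mathbb Z}\mathrm{wt}^{\mathcal P}(\boldsymbol\lambda_1)$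 for fixed $\lambda_1^{(0)}$ (finite, independent of $\lambda_1^{(0)}$ when $c_1c_2<1$), and $\mathrm P^{\mathcal P}(\mathbf L_1)=\mathrm{wt}^{\mathcal P}(\boldsymbol\lambda_1)/Z$ where $L_1(j)=\lambda_1^{(j)}-\lambda_1^{(0)}$. $\mathbb P^{\boldsymbol b,\boldsymbol b}_{\mathrm{GRW}}$: law of two independent walks $\mathbf L_1,\mathbf L_2$ with $L_i(0)=0$ and independent increments $L_i(j)-L_i(j-1)\sim\mathrm{Geom}(b_j)$ ($\mathbb P(\mathrm{Geom}(q)=n)=(1-q)q^n$). $V(\mathbf L)=(c_1c_2)^{\max_{1\le j\le N}(L_2(j)-L_1(j-1))}c_2^{L_1(N)-L_2(N)}$, $\mathbb P^{\boldsymbol b,c_1,c_2}_{\mathrm{stat\,Geo}}=V\,\mathbb P^{\boldsymbol b,\boldsymbol b}_{\mathrm{GRW}}/\mathbb E^{\boldsymbol b,\boldsymbol b}_{\mathrm{GRW}}[V]$, and $\mathrm P^{\boldsymbol b,c_1,c_2}_{\mathrm{stat\,Geo}}$ is the marginal law of $\mathbf L_1$. *)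

theory Defs
  imports "HOL-Analysis.Analysis"
begin

text \<open>Vectors indexed by 0..N are encoded as functions nat => int vanishing beyond N.\<close>
definition vecs :: "nat \<Rightarrow> (nat \<Rightarrow> int) set" where
  "vecs N = {f. \<forall>j>N. f j = 0}"

definition paths :: "nat \<Rightarrow> (nat \<Rightarrow> int) set" where
  "paths N = {f. f 0 = 0 \<and> (\<forall>j>N. f j = 0)}"

definition ind :: "bool \<Rightarrow> real" where
  "ind P = (if P then 1 else 0)"

text \<open>Labels of the horizontal path with vertices (k+j,k): b_j = a_{k+j}, indices of a mod N
  (a given on 1..N).\<close>
definition horizLabels :: "nat \<Rightarrow> (nat \<Rightarrow> real) \<Rightarrow> int \<Rightarrow> nat \<Rightarrow> real" where
  "horizLabels N a k j = a (nat ((k + int j - 1) mod int N) + 1)"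

definition wtGP :: "nat \<Rightarrow> (nat \<Rightarrow> real) \<Rightarrow> real \<Rightarrow> real \<Rightarrow> (nat \<Rightarrow> int) \<Rightarrow> (nat \<Rightarrow> int) \<Rightarrow> real" where
  "wtGP N b c1 c2 l1 l2 =
     c1 powi (l1 0 - l2 0) * c2 powi (l1 N - l2 N) *
     (\<Prod>j\<in>{1..N}.
        (b j powi (l1 j - l1 (j-1)) * ind (l1 j \<ge> l1 (j-1))) *
        (b j powi (l2 j - l2 (j-1)) * ind (l2 j \<ge> l2 (j-1))) *
        ind (l1 (j-1) \<ge> l2 j))"

definition wtP :: "nat \<Rightarrow> (nat \<Rightarrow> real) \<Rightarrow> real \<Rightarrow> real \<Rightarrow> (nat \<Rightarrow> int) \<Rightarrow> real" where
  "wtP N b c1 c2 l1 = (\<Sum>\<^sub>\<infinity>l2\<in>vecs N. wtGP N b c1 c2 l1 l2)"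

definition Zpart :: "nat \<Rightarrow> (nat \<Rightarrow> real) \<Rightarrow> real \<Rightarrow> real \<Rightarrow> int \<Rightarrow> real" where
  "Zpart N b c1 c2 x0 = (\<Sum>\<^sub>\<infinity>l1\<in>{l \<in> vecs N. l 0 = x0}. wtP N b c1 c2 l1)"

text \<open>P^P(L_1) with lambda_1^(0) = x0 and lambda_1^(j) = x0 + L_1(j).\<close>
definition PP :: "nat \<Rightarrow> (nat \<Rightarrow> real) \<Rightarrow> real \<Rightarrow> real \<Rightarrow> int \<Rightarrow> (nat \<Rightarrow> int) \<Rightarrow> real" where
  "PP N b c1 c2 x0 L =
     wtP N b c1 c2 (\<lambda>j. if j \<le> N then x0 + L j else 0) / Zpart N b c1 c2 x0"

definition grw :: "nat \<Rightarrow> (nat \<Rightarrow> real) \<Rightarrow> (nat \<Rightarrow> int) \<Rightarrow> real" where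
  "grw N b L = (\<Prod>j\<in>{1..N}.
     if L j \<ge> L (j-1) then (1 - b j) * b j ^ nat (L j - L (j-1)) else 0)"

definition Vfun :: "nat \<Rightarrow> real \<Rightarrow> real \<Rightarrow> (nat \<Rightarrow> int) \<Rightarrow> (nat \<Rightarrow> int) \<Rightarrow> real" where
  "Vfun N c1 c2 L1 L2 =
     (c1 * c2) powi (MAX j\<in>{1..N}. L2 j - L1 (j-1)) * c2 powi (L1 N - L2 N)"

definition EV :: "nat \<Rightarrow> (nat \<Rightarrow> real) \<Rightarrow> real \<Rightarrow> real \<Rightarrow> real" where
  "EV N b c1 c2 = (\<Sum>\<^sub>\<infinity>(L1, L2)\<in>paths N \<times> paths N.
      Vfun N c1 c2 L1 L2 * grw N b L1 * grw N b L2)"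

definition PstatGeo :: "nat \<Rightarrow> (nat \<Rightarrow> real) \<Rightarrow> real \<Rightarrow> real \<Rightarrow> (nat \<Rightarrow> int) \<Rightarrow> real" where
  "PstatGeo N b c1 c2 L1 =
     (\<Sum>\<^sub>\<infinity>L2\<in>paths N. Vfun N c1 c2 L1 L2 * grw N b L1 * grw N b L2) / EV N b c1 c2"

end

theory Submission
  imports Defs
begin



lemma ennsum[simp]: "(f::'a \<Rightarrow> ennreal) summable_on S"
  by (rule nonneg_summable_on_complete) simp

lemma enn_sum_le_infsum:
  fixes f :: "'a \<Rightarrow> ennreal"
  assumes "finite F" "F \<subseteq> A"
  shows "sum f F \<le> infsum f A"
proof -
  have "infsum f F \<le> infsum f A"
    by (rule infsum_mono_neutral) (use assms in \<open>auto intro: ennsum\<close>)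
  then show ?thesis using assms by simp
qed

lemma enn_infsum_mono_set:
  fixes f :: "'a \<Rightarrow> ennreal"
  assumes "F \<subseteq> A"
  shows "infsum f F \<le> infsum f A"
  by (rule infsum_mono_neutral) (use assms in \<open>auto intro: ennsum\<close>)

lemma enn_infsum_mono:
  fixes f g :: "'a \<Rightarrow> ennreal"
  assumes "\<And>x. x \<in> A \<Longrightarrow> f x \<le> g x"
  shows "infsum f A \<le> infsum g A"
  by (rule infsum_mono) (use assms in \<open>auto intro: ennsum\<close>)

lemma enn_infsum_cmult:
  fixes f :: "'a \<Rightarrow> ennreal"
  shows "infsum (\<lambda>x. c * f x) A = c * infsum f A"
  by (simp add: nonneg_infsum_complete sum_distrib_left SUP_mult_left_ennreal)

lemma enn_Sigma_finite:
  fixes f :: "'a \<Rightarrow> 'b \<Rightarrow> ennreal"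
  assumes "finite A"
  shows "infsum (\<lambda>(x,y). f x y) (Sigma A B) = (\<Sum>x\<in>A. infsum (f x) (B x))"
  using assms
proof (induction A rule: finite_induct)
  case empty
  then show ?case by simp
next
  case (insert a A)
  have eq: "Sigma (insert a A) B = Pair a ` B a \<union> Sigma A B" by auto
  have disj: "Pair a ` B a \<inter> Sigma A B = {}" using insert.hyps by auto
  have "infsum (\<lambda>(x,y). f x y) (Pair a ` B a) = infsum (f a) (B a)"
    by (subst infsum_reindex) (auto simp: inj_on_def o_def)
  moreover have "infsum (\<lambda>(x,y). f x y) (Pair a ` B a \<union> Sigma A B) =
     infsum (\<lambda>(x,y). f x y) (Pair a ` B a) + infsum (\<lambda>(x,y). f x y) (Sigma A B)"
    by (rule infsum_Un_disjoint[OF ennsum ennsum disj])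
  ultimately show ?case
    using insert by (simp add: eq)
qed

lemma enn_Sigma:
  fixes f :: "'a \<Rightarrow> 'b \<Rightarrow> ennreal"
  shows "infsum (\<lambda>(x,y). f x y) (Sigma A B) = infsum (\<lambda>x. infsum (f x) (B x)) A"
proof (rule antisym)
  show "infsum (\<lambda>(x,y). f x y) (Sigma A B) \<le> infsum (\<lambda>x. infsum (f x) (B x)) A"
  proof (subst nonneg_infsum_complete, simp, rule SUP_least, clarify)
    fix F assume F: "finite F" "F \<subseteq> Sigma A B"
    have "sum (\<lambda>(x,y). f x y) F \<le> infsum (\<lambda>(x,y). f x y) (Sigma (fst ` F) B)"
      by (rule enn_sum_le_infsum) (use F in force)+
    also have "\<dots> = (\<Sum>x\<in>fst ` F. infsum (f x) (B x))"
      using F by (intro enn_Sigma_finite) auto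
    also have "\<dots> \<le> infsum (\<lambda>x. infsum (f x) (B x)) A"
      by (rule enn_sum_le_infsum) (use F in auto)
    finally show "sum (\<lambda>(x,y). f x y) F \<le> infsum (\<lambda>x. infsum (f x) (B x)) A" .
  qed
next
  show "infsum (\<lambda>x. infsum (f x) (B x)) A \<le> infsum (\<lambda>(x,y). f x y) (Sigma A B)"
  proof (subst nonneg_infsum_complete, simp, rule SUP_least, clarify)
    fix F assume F: "finite F" "F \<subseteq> A"
    have "(\<Sum>x\<in>F. infsum (f x) (B x)) = infsum (\<lambda>(x,y). f x y) (Sigma F B)"
      using F by (intro enn_Sigma_finite[symmetric]) auto
    also have "\<dots> \<le> infsum (\<lambda>(x,y). f x y) (Sigma A B)"
      by (rule enn_infsum_mono_set) (use F in auto)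
    finally show "(\<Sum>x\<in>F. infsum (f x) (B x)) \<le> infsum (\<lambda>(x,y). f x y) (Sigma A B)" .
  qed
qed

lemma real_infsum_enn:
  fixes f :: "'a \<Rightarrow> real"
  assumes nn: "\<And>x. x\<in>A \<Longrightarrow> f x \<ge> 0"
  shows "infsum f A = enn2real (infsum (\<lambda>x. ennreal (f x)) A)"
proof (cases "f summable_on A")
  case True
  have "ennreal (infsum f A) = (SUP F\<in>{F. finite F \<and> F \<subseteq> A}. (ennreal (sum f F)))"
    by (rule infsum_nonneg_is_SUPREMUM_ennreal[OF True nn])
  also have "\<dots> = infsum (\<lambda>x. ennreal (f x)) A"
    by (subst nonneg_infsum_complete) (auto intro!: SUP_cong simp: sum_ennreal nn subset_iff)
  finally show ?thesis using infsum_nonneg[of A f] nn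
    by (metis enn2real_ennreal)
next
  case False
  have "infsum (\<lambda>x. ennreal (f x)) A = \<infinity>"
  proof (rule ccontr)
    assume ne: "infsum (\<lambda>x. ennreal (f x)) A \<noteq> \<infinity>"
    have "bdd_above (sum f ` {F. F\<subseteq>A \<and> finite F})"
    proof (rule bdd_aboveI, clarify)
      fix F assume F: "F \<subseteq> A" "finite F"
      have "ennreal (sum f F) = (\<Sum>x\<in>F. ennreal (f x))"
        using F nn by (subst sum_ennreal) auto
      also have "\<dots> \<le> infsum (\<lambda>x. ennreal (f x)) A"
        by (rule enn_sum_le_infsum) (use F in auto)
      finally have le: "ennreal (sum f F) \<le> infsum (\<lambda>x. ennreal (f x)) A" .
      show "sum f F \<le> enn2real (infsum (\<lambda>x. ennreal (f x)) A)"
      proof -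
        have "0 \<le> sum f F" using F nn by (intro sum_nonneg) auto
        then show ?thesis
          using le ne enn2real_mono[of "ennreal (sum f F)" "infsum (\<lambda>x. ennreal (f x)) A"]
          by (simp add: less_top)
      qed
    qed
    then have "f summable_on A" using nn by (intro nonneg_bdd_above_summable_on) auto
    then show False using False by simp
  qed
  then show ?thesis using False by (simp add: infsum_not_exists)
qed




lemma enn_of_real_infsum:
  fixes f :: "'a \<Rightarrow> real"
  assumes True: "f summable_on A" and nn: "\<And>x. x\<in>A \<Longrightarrow> f x \<ge> 0"
  shows "infsum (\<lambda>x. ennreal (f x)) A = ennreal (infsum f A)"
proof -
  have "ennreal (infsum f A) = (SUP F\<in>{F. finite F \<and> F \<subseteq> A}. (ennreal (sum f F)))"
    by (rule infsum_nonneg_is_SUPREMUM_ennreal[OF True nn])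
  also have "\<dots> = infsum (\<lambda>x. ennreal (f x)) A"
    by (subst nonneg_infsum_complete) (auto intro!: SUP_cong simp: sum_ennreal nn subset_iff)
  finally show ?thesis by simp
qed

lemma geo_fin:
  fixes \<rho> :: real
  assumes "0 \<le> \<rho>" "\<rho> < 1"
  shows "infsum (\<lambda>d::int. ennreal (if d \<ge> 0 then \<rho> ^ nat d else 0)) UNIV < \<infinity>"
proof -
  have "infsum (\<lambda>d::int. ennreal (if d \<ge> 0 then \<rho> ^ nat d else 0)) UNIV
      = infsum (\<lambda>d::int. ennreal (if d \<ge> 0 then \<rho> ^ nat d else 0)) (range int)"
    by (rule infsum_cong_neutral) (auto simp: image_iff, presburger)
  also have "\<dots> = infsum (\<lambda>n::nat. ennreal (\<rho> ^ n)) UNIV"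
    by (subst infsum_reindex) (auto simp: o_def)
  also have "\<dots> = ennreal (infsum (\<lambda>n::nat. \<rho> ^ n) UNIV)"
    using assms by (intro enn_of_real_infsum summable_nonneg_imp_summable_on summable_geometric) auto
  finally show ?thesis by simp
qed

lemma paths_Suc_bij:
  "bij_betw (\<lambda>(L,d). L(Suc N := L N + d)) (paths N \<times> UNIV) (paths (Suc N))"
proof (rule bij_betw_byWitness[where f' = "\<lambda>L. (L(Suc N := 0), L (Suc N) - L N)"])
  show "\<forall>a\<in>paths N \<times> UNIV. (\<lambda>L. (L(Suc N := 0), L (Suc N) - L N)) ((\<lambda>(L, d). L(Suc N := L N + d)) a) = a"
    by (auto simp: paths_def fun_eq_iff)
  show "\<forall>a'\<in>paths (Suc N). (\<lambda>(L, d). L(Suc N := L N + d)) ((\<lambda>L. (L(Suc N := 0), L (Suc N) - L N)) a') = a'"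
    by (auto simp: paths_def fun_eq_iff)
  show "(\<lambda>(L, d). L(Suc N := L N + d)) ` (paths N \<times> UNIV) \<subseteq> paths (Suc N)"
    by (auto simp: paths_def)
  show "(\<lambda>L. (L(Suc N := 0), L (Suc N) - L N)) ` paths (Suc N) \<subseteq> paths N \<times> UNIV"
    by (auto simp: paths_def)
qed

lemma paths_0: "paths 0 = {\<lambda>_. 0}"
  by (auto simp: paths_def fun_eq_iff) (metis gr0I)

lemma prod_paths:
  fixes g :: "nat \<Rightarrow> int \<Rightarrow> ennreal"
  shows "infsum (\<lambda>L. \<Prod>j\<in>{1..N}. g j (L j - L (j-1))) (paths N) = (\<Prod>j\<in>{1..N}. infsum (g j) UNIV)"
proof (induction N)
  case 0
  then show ?case by (simp add: paths_0)
next
  case (Suc N)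
  let ?P = "\<lambda>L. \<Prod>j\<in>{1..N}. g j (L j - L (j-1))"
  have "infsum (\<lambda>L. \<Prod>j\<in>{1..Suc N}. g j (L j - L (j-1))) (paths (Suc N))
      = infsum (\<lambda>(L,d). \<Prod>j\<in>{1..Suc N}. g j ((L(Suc N := L N + d)) j - (L(Suc N := L N + d)) (j-1))) (paths N \<times> UNIV)"
    using infsum_reindex_bij_betw[OF paths_Suc_bij, of "\<lambda>L. \<Prod>j\<in>{1..Suc N}. g j (L j - L (j-1))" N]
    by (simp add: case_prod_beta')
  also have "\<dots> = infsum (\<lambda>(L,d). ?P L * g (Suc N) d) (paths N \<times> UNIV)"
  proof (rule infsum_cong, clarify)
    fix L d
    have "(\<Prod>j\<in>{1..N}. g j ((L(Suc N := L N + d)) j - (L(Suc N := L N + d)) (j-1))) = ?P L"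
      by (rule prod.cong) auto
    then show "(\<Prod>j\<in>{1..Suc N}. g j ((L(Suc N := L N + d)) j - (L(Suc N := L N + d)) (j-1))) = ?P L * g (Suc N) d"
      by simp
  qed
  also have "\<dots> = infsum (\<lambda>L. infsum (\<lambda>d. ?P L * g (Suc N) d) UNIV) (paths N)"
    by (rule enn_Sigma[where f = "\<lambda>L d. ?P L * g (Suc N) d"])
  also have "\<dots> = infsum (\<lambda>L. ?P L * infsum (g (Suc N)) UNIV) (paths N)"
    by (simp add: enn_infsum_cmult)
  also have "\<dots> = infsum ?P (paths N) * infsum (g (Suc N)) UNIV"
    using enn_infsum_cmult[of "infsum (g (Suc N)) UNIV" ?P "paths N"] by (simp add: mult.commute)
  finally show ?case using Suc by simp
qed




definition shiftv :: "nat \<Rightarrow> int \<Rightarrow> (nat \<Rightarrow> int) \<Rightarrow> nat \<Rightarrow> int" where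
  "shiftv N x L = (\<lambda>j. if j \<le> N then x + L j else 0)"

definition Ainc :: "nat \<Rightarrow> (nat \<Rightarrow> real) \<Rightarrow> (nat \<Rightarrow> int) \<Rightarrow> real" where
  "Ainc N b L = (\<Prod>j\<in>{1..N}. b j powi (L j - L (j-1)) * ind (L j \<ge> L (j-1)))"

definition Mx :: "nat \<Rightarrow> (nat \<Rightarrow> int) \<Rightarrow> (nat \<Rightarrow> int) \<Rightarrow> int" where
  "Mx N L1 L2 = (MAX j\<in>{1..N}. L2 j - L1 (j-1))"

lemma prod_ind: "finite A \<Longrightarrow> (\<Prod>j\<in>A. ind (P j)) = ind (\<forall>j\<in>A. P j)"
  by (induction A rule: finite_induct) (auto simp: ind_def)

lemma grw_Ainc: "grw N b L = (\<Prod>j\<in>{1..N}. 1 - b j) * Ainc N b L"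
  unfolding grw_def Ainc_def prod.distrib[symmetric]
  by (rule prod.cong) (auto simp: ind_def power_int_nonneg_exp)

lemma telescope_powi:
  fixes r :: real and N :: nat and L :: "nat \<Rightarrow> int"
  assumes "r \<noteq> 0"
  shows "(\<Prod>j\<in>{1..N}. r powi (L j - L (j-1))) = r powi (L N - L 0)"
proof (induction N)
  case 0 then show ?case by simp
next
  case (Suc N)
  have "(\<Prod>j\<in>{1..Suc N}. r powi (L j - L (j-1))) = r powi (L N - L 0) * r powi (L (Suc N) - L N)"
    using Suc by simp
  also have "\<dots> = r powi (L (Suc N) - L 0)"
    using assms by (simp add: power_int_add[symmetric])
  finally show ?case .
qed

lemma Mx_le_iff:
  assumes "N \<ge> 1"
  shows "Mx N L1 L2 \<le> t \<longleftrightarrow> (\<forall>j\<in>{1..N}. L2 j - L1 (j-1) \<le> t)"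
  unfolding Mx_def using assms by (subst Max_le_iff) auto

lemma Mx_ge:
  assumes "j \<in> {1..N}"
  shows "L2 j - L1 (j-1) \<le> Mx N L1 L2"
  unfolding Mx_def using assms by (intro Max_ge) auto

lemma wtGP_nonneg:
  assumes "\<And>j. j \<in> {1..N} \<Longrightarrow> 0 < b j" "c1 > 0" "c2 > 0"
  shows "0 \<le> wtGP N b c1 c2 l1 l2"
  unfolding wtGP_def using assms
  by (intro mult_nonneg_nonneg prod_nonneg) (auto simp: ind_def less_imp_le)

lemma grw_nonneg:
  assumes "\<And>j. j \<in> {1..N} \<Longrightarrow> 0 < b j \<and> b j < 1"
  shows "0 \<le> grw N b L"
  unfolding grw_def using assms
  by (intro prod_nonneg) (auto intro!: mult_nonneg_nonneg simp: less_imp_le)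

lemma Vfun_nonneg:
  assumes "c1 > 0" "c2 > 0"
  shows "0 \<le> Vfun N c1 c2 L1 L2"
  unfolding Vfun_def using assms by simp

lemma wtGP_key:
  assumes N1: "N \<ge> 1" and b: "\<And>j. j \<in> {1..N} \<Longrightarrow> 0 < b j \<and> b j < 1"
    and c: "c1 > 0" "c2 > 0"
    and L1: "L1 \<in> paths N" and L2: "L2 \<in> paths N"
  shows "wtGP N b c1 c2 (shiftv N x0 L1) (shiftv N (x0 - t) L2) =
     (if Mx N L1 L2 \<le> t then (c1*c2) powi (t - Mx N L1 L2) else 0) *
     (Vfun N c1 c2 L1 L2 * grw N b L1 * grw N b L2 / (\<Prod>j\<in>{1..N}. 1 - b j)^2)"
proof -
  define P where "P = (\<Prod>j\<in>{1..N}. 1 - b j)"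
  define M where "M = Mx N L1 L2"
  have P0: "P \<noteq> 0" unfolding P_def using b by (subst prod_zero_iff) force+
  have L10: "L1 0 = 0" and L20: "L2 0 = 0" using L1 L2 by (auto simp: paths_def)
  have prod_eq: "(\<Prod>j\<in>{1..N}.
        (b j powi (shiftv N x0 L1 j - shiftv N x0 L1 (j-1)) * ind (shiftv N x0 L1 j \<ge> shiftv N x0 L1 (j-1))) *
        (b j powi (shiftv N (x0-t) L2 j - shiftv N (x0-t) L2 (j-1)) * ind (shiftv N (x0-t) L2 j \<ge> shiftv N (x0-t) L2 (j-1))) *
        ind (shiftv N x0 L1 (j-1) \<ge> shiftv N (x0-t) L2 j))
      = Ainc N b L1 * Ainc N b L2 * ind (M \<le> t)"
  proof -
    have "(\<Prod>j\<in>{1..N}.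
        (b j powi (shiftv N x0 L1 j - shiftv N x0 L1 (j-1)) * ind (shiftv N x0 L1 j \<ge> shiftv N x0 L1 (j-1))) *
        (b j powi (shiftv N (x0-t) L2 j - shiftv N (x0-t) L2 (j-1)) * ind (shiftv N (x0-t) L2 j \<ge> shiftv N (x0-t) L2 (j-1))) *
        ind (shiftv N x0 L1 (j-1) \<ge> shiftv N (x0-t) L2 j))
      = (\<Prod>j\<in>{1..N}.
        (b j powi (L1 j - L1 (j-1)) * ind (L1 j \<ge> L1 (j-1))) *
        (b j powi (L2 j - L2 (j-1)) * ind (L2 j \<ge> L2 (j-1))) *
        ind (L2 j - L1 (j-1) \<le> t))"
      by (rule prod.cong) (auto simp: shiftv_def intro!: arg_cong[where f=ind])
    also have "\<dots> = Ainc N b L1 * Ainc N b L2 * (\<Prod>j\<in>{1..N}. ind (L2 j - L1 (j-1) \<le> t))"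
      unfolding Ainc_def prod.distrib ..
    also have "(\<Prod>j\<in>{1..N}. ind (L2 j - L1 (j-1) \<le> t)) = ind (M \<le> t)"
      by (simp add: prod_ind M_def Mx_le_iff[OF N1])
    finally show ?thesis .
  qed
  have lhs: "wtGP N b c1 c2 (shiftv N x0 L1) (shiftv N (x0 - t) L2)
      = c1 powi t * c2 powi (L1 N - L2 N + t) * (Ainc N b L1 * Ainc N b L2 * ind (M \<le> t))"
    unfolding wtGP_def prod_eq using N1 by (simp add: shiftv_def L10 L20 algebra_simps)
  have V: "Vfun N c1 c2 L1 L2 = (c1*c2) powi M * c2 powi (L1 N - L2 N)"
    unfolding Vfun_def M_def Mx_def ..
  show ?thesis
  proof (cases "M \<le> t")
    case False
    then show ?thesis by (simp add: lhs M_def[symmetric] ind_def)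
  next
    case True
    have "(c1*c2) powi (t - M) * ((c1*c2) powi M * c2 powi (L1 N - L2 N) * (P * Ainc N b L1) * (P * Ainc N b L2) / P^2)
        = ((c1*c2) powi (t - M) * (c1*c2) powi M) * c2 powi (L1 N - L2 N) * Ainc N b L1 * Ainc N b L2"
      using P0 by (simp add: field_simps power2_eq_square)
    also have "(c1*c2) powi (t - M) * (c1*c2) powi M = (c1*c2) powi t"
      using c by (simp add: power_int_add[symmetric])
    also have "(c1*c2) powi t * c2 powi (L1 N - L2 N) = c1 powi t * c2 powi (L1 N - L2 N + t)"
      using c by (simp add: power_int_add power_int_mult_distrib)
    finally have calc: "(c1*c2) powi (t - M) * ((c1*c2) powi M * c2 powi (L1 N - L2 N) * (P * Ainc N b L1) * (P * Ainc N b L2) / P^2)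
        = c1 powi t * c2 powi (L1 N - L2 N + t) * Ainc N b L1 * Ainc N b L2" .
    show ?thesis
      unfolding lhs V grw_Ainc P_def[symmetric] M_def[symmetric] using True calc by (simp add: ind_def)
  qed
qed




definition Se :: "nat \<Rightarrow> (nat \<Rightarrow> real) \<Rightarrow> real \<Rightarrow> real \<Rightarrow> (nat \<Rightarrow> int) \<Rightarrow> ennreal" where
  "Se N b c1 c2 L1 = infsum (\<lambda>L2. ennreal (Vfun N c1 c2 L1 L2 * grw N b L1 * grw N b L2)) (paths N)"

definition Gq :: "real \<Rightarrow> ennreal" where
  "Gq q = infsum (\<lambda>s::int. ennreal (if s \<ge> 0 then q ^ nat s else 0)) UNIV"

lemma vecs_bij: "bij_betw (\<lambda>(L2,t). shiftv N (x0 - t) L2) (paths N \<times> UNIV) (vecs N)"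
proof (rule bij_betw_byWitness[where f' = "\<lambda>l. (\<lambda>j. if j \<le> N then l j - l 0 else 0, x0 - l 0)"])
  show "\<forall>a\<in>paths N \<times> UNIV. (\<lambda>l. (\<lambda>j. if j \<le> N then l j - l 0 else 0, x0 - l 0)) ((\<lambda>(L2, t). shiftv N (x0 - t) L2) a) = a"
    by (auto simp: paths_def shiftv_def fun_eq_iff)
  show "\<forall>a'\<in>vecs N. (\<lambda>(L2, t). shiftv N (x0 - t) L2) ((\<lambda>l. (\<lambda>j. if j \<le> N then l j - l 0 else 0, x0 - l 0)) a') = a'"
    by (auto simp: vecs_def shiftv_def fun_eq_iff)
  show "(\<lambda>(L2, t). shiftv N (x0 - t) L2) ` (paths N \<times> UNIV) \<subseteq> vecs N"
    by (auto simp: vecs_def shiftv_def)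
  show "(\<lambda>l. (\<lambda>j. if j \<le> N then l j - l 0 else 0, x0 - l 0)) ` vecs N \<subseteq> paths N \<times> UNIV"
    by (auto simp: paths_def)
qed

lemma start_bij: "bij_betw (shiftv N x0) (paths N) {l \<in> vecs N. l 0 = x0}"
proof (rule bij_betw_byWitness[where f' = "\<lambda>l j. if j \<le> N then l j - x0 else 0"])
  show "\<forall>a\<in>paths N. (\<lambda>l j. if j \<le> N then l j - x0 else 0) (shiftv N x0 a) = a"
    by (auto simp: paths_def shiftv_def fun_eq_iff)
  show "\<forall>a'\<in>{l \<in> vecs N. l 0 = x0}. shiftv N x0 ((\<lambda>l j. if j \<le> N then l j - x0 else 0) a') = a'"
    by (auto simp: vecs_def shiftv_def fun_eq_iff)
  show "shiftv N x0 ` paths N \<subseteq> {l \<in> vecs N. l 0 = x0}"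
    by (auto simp: vecs_def paths_def shiftv_def)
  show "(\<lambda>l j. if j \<le> N then l j - x0 else 0) ` {l \<in> vecs N. l 0 = x0} \<subseteq> paths N"
    by (auto simp: paths_def)
qed

lemma G_shift:
  fixes q :: real and M :: int
  shows "infsum (\<lambda>t. ennreal (if M \<le> t then q powi (t - M) else 0)) UNIV = Gq q"
proof -
  have bij: "bij_betw (\<lambda>s. s + M) UNIV UNIV"
    by (rule bij_betw_byWitness[where f' = "\<lambda>t. t - M"]) auto
  have "infsum (\<lambda>t. ennreal (if M \<le> t then q powi (t - M) else 0)) UNIV
      = infsum (\<lambda>s. ennreal (if M \<le> s + M then q powi (s + M - M) else 0)) UNIV"
    using infsum_reindex_bij_betw[OF bij, of "\<lambda>t. ennreal (if M \<le> t then q powi (t - M) else 0)"]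
    by simp
  also have "\<dots> = Gq q"
    unfolding Gq_def by (rule infsum_cong) (auto simp: power_int_nonneg_exp)
  finally show ?thesis .
qed

lemma Gq_pos_fin:
  assumes "0 \<le> q" "q < 1"
  shows "Gq q < \<infinity>" "1 \<le> Gq q"
proof -
  show "Gq q < \<infinity>" unfolding Gq_def by (rule geo_fin[OF assms])
  have "(\<Sum>s\<in>{0::int}. ennreal (if s \<ge> 0 then q ^ nat s else 0)) \<le> Gq q"
    unfolding Gq_def by (rule enn_sum_le_infsum) auto
  then show "1 \<le> Gq q" by simp
qed

context
  fixes N :: nat and b :: "nat \<Rightarrow> real" and c1 c2 :: real
  assumes N1: "N \<ge> 1" and b: "\<And>j. j \<in> {1..N} \<Longrightarrow> 0 < b j \<and> b j < 1"
    and c1: "c1 > 0" and c2: "c2 > 0"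
    and bc1: "\<And>j. j \<in> {1..N} \<Longrightarrow> b j * c1 < 1"
    and bc2: "\<And>j. j \<in> {1..N} \<Longrightarrow> b j * c2 < 1"
    and q: "c1 * c2 < 1"
begin

lemma wtPe:
  assumes L1: "L1 \<in> paths N"
  shows "infsum (\<lambda>l2. ennreal (wtGP N b c1 c2 (shiftv N x0 L1) l2)) (vecs N)
      = ennreal (1 / (\<Prod>j\<in>{1..N}. 1 - b j)^2) * Gq (c1*c2) * Se N b c1 c2 L1"
proof -
  define K where "K = (\<Prod>j\<in>{1..N}. 1 - b j)^2"
  have K0: "K \<ge> 0" unfolding K_def by simp
  define X where "X = (\<lambda>L2. Vfun N c1 c2 L1 L2 * grw N b L1 * grw N b L2)"
  have X0: "X L2 \<ge> 0" for L2
    unfolding X_def using c1 c2 b by (intro mult_nonneg_nonneg Vfun_nonneg grw_nonneg) auto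
  have "infsum (\<lambda>l2. ennreal (wtGP N b c1 c2 (shiftv N x0 L1) l2)) (vecs N)
      = infsum (\<lambda>(L2,t). ennreal (wtGP N b c1 c2 (shiftv N x0 L1) (shiftv N (x0 - t) L2))) (paths N \<times> UNIV)"
    using infsum_reindex_bij_betw[OF vecs_bij, of "\<lambda>l2. ennreal (wtGP N b c1 c2 (shiftv N x0 L1) l2)" N x0]
    by (simp add: case_prod_beta')
  also have "\<dots> = infsum (\<lambda>(L2,t). ennreal (if Mx N L1 L2 \<le> t then (c1*c2) powi (t - Mx N L1 L2) else 0)
                    * ennreal (X L2 / K)) (paths N \<times> UNIV)"
  proof (rule infsum_cong, clarify)
    fix L2 t assume L2: "L2 \<in> paths N"
    show "ennreal (wtGP N b c1 c2 (shiftv N x0 L1) (shiftv N (x0 - t) L2)) =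
      ennreal (if Mx N L1 L2 \<le> t then (c1*c2) powi (t - Mx N L1 L2) else 0) * ennreal (X L2 / K)"
    proof -
      have e: "wtGP N b c1 c2 (shiftv N x0 L1) (shiftv N (x0 - t) L2) =
        (if Mx N L1 L2 \<le> t then (c1*c2) powi (t - Mx N L1 L2) else 0) * (X L2 / K)"
        unfolding X_def K_def by (rule wtGP_key[OF N1 b c1 c2 L1 L2])
      show ?thesis unfolding e
        using c1 c2 X0[of L2] K0 by (subst ennreal_mult) auto
    qed
  qed
  also have "\<dots> = infsum (\<lambda>L2. infsum (\<lambda>t. ennreal (if Mx N L1 L2 \<le> t then (c1*c2) powi (t - Mx N L1 L2) else 0)
                    * ennreal (X L2 / K)) UNIV) (paths N)"
    by (rule enn_Sigma[where f = "\<lambda>L2 t. ennreal (if Mx N L1 L2 \<le> t then (c1*c2) powi (t - Mx N L1 L2) else 0)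
                    * ennreal (X L2 / K)"])
  also have "\<dots> = infsum (\<lambda>L2. (ennreal (1/K) * Gq (c1*c2)) * ennreal (X L2)) (paths N)"
  proof (rule infsum_cong)
    fix L2
    have "infsum (\<lambda>t. ennreal (if Mx N L1 L2 \<le> t then (c1*c2) powi (t - Mx N L1 L2) else 0)
                    * ennreal (X L2 / K)) UNIV
       = ennreal (X L2 / K) * infsum (\<lambda>t. ennreal (if Mx N L1 L2 \<le> t then (c1*c2) powi (t - Mx N L1 L2) else 0)) UNIV"
      by (subst enn_infsum_cmult[symmetric]) (simp add: mult.commute)
    also have "\<dots> = ennreal (X L2 / K) * Gq (c1*c2)" by (simp add: G_shift)
    finally have h: "infsum (\<lambda>t. ennreal (if Mx N L1 L2 \<le> t then (c1*c2) powi (t - Mx N L1 L2) else 0)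
                    * ennreal (X L2 / K)) UNIV = ennreal (X L2 / K) * Gq (c1*c2)" .
    have eq: "ennreal (X L2 / K) = ennreal (1/K) * ennreal (X L2)"
      using K0 ennreal_mult[of "1/K" "X L2"] X0[of L2] by simp
    show "infsum (\<lambda>t. ennreal (if Mx N L1 L2 \<le> t then (c1*c2) powi (t - Mx N L1 L2) else 0)
                    * ennreal (X L2 / K)) UNIV = (ennreal (1/K) * Gq (c1*c2)) * ennreal (X L2)"
      unfolding h unfolding eq by (simp only: mult_ac)
  qed
  also have "\<dots> = ennreal (1/K) * Gq (c1*c2) * Se N b c1 c2 L1"
    unfolding Se_def X_def by (rule enn_infsum_cmult)
  finally show ?thesis unfolding K_def .
qed

end



lemma mono_nonneg:
  fixes L :: "nat \<Rightarrow> int"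
  assumes "L 0 = 0" "\<forall>j\<in>{1..N}. L (j-1) \<le> L j"
  shows "j \<le> N \<Longrightarrow> L j \<ge> 0"
proof (induction j)
  case 0 then show ?case using assms by simp
next
  case (Suc j)
  then have "L j \<le> L (Suc j)" using assms(2) by (metis atLeastAtMost_iff diff_Suc_1 le_add1 plus_1_eq_Suc)
  then show ?case using Suc by simp
qed

context
  fixes N :: nat and b :: "nat \<Rightarrow> real" and c1 c2 :: real
  assumes N1: "N \<ge> 1" and b: "\<And>j. j \<in> {1..N} \<Longrightarrow> 0 < b j \<and> b j < 1"
    and c1: "c1 > 0" and c2: "c2 > 0"
    and bc1: "\<And>j. j \<in> {1..N} \<Longrightarrow> b j * c1 < 1"
    and bc2: "\<And>j. j \<in> {1..N} \<Longrightarrow> b j * c2 < 1"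
    and q: "c1 * c2 < 1"
begin

lemma Se_fin_aux:
  assumes r: "r > 0" "\<And>j. j \<in> {1..N} \<Longrightarrow> b j * r < 1"
    and B: "B \<ge> 0"
    and bound: "\<And>L2. L2 \<in> paths N \<Longrightarrow> (\<forall>j\<in>{1..N}. L2 (j-1) \<le> L2 j) \<Longrightarrow>
        Vfun N c1 c2 L1 L2 * grw N b L1 \<le> B * r powi (L2 N)"
  shows "Se N b c1 c2 L1 < \<infinity>"
proof -
  define h where "h = (\<lambda>j (d::int). ennreal (if d \<ge> 0 then (b j * r) ^ nat d else 0))"
  have pt: "ennreal (Vfun N c1 c2 L1 L2 * grw N b L1 * grw N b L2)
      \<le> ennreal B * (\<Prod>j\<in>{1..N}. h j (L2 j - L2 (j-1)))" if L2: "L2 \<in> paths N" for L2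
  proof -
    have hprod: "(\<Prod>j\<in>{1..N}. h j (L2 j - L2 (j-1)))
        = ennreal (\<Prod>j\<in>{1..N}. (if L2 j - L2 (j-1) \<ge> 0 then (b j * r) ^ nat (L2 j - L2 (j-1)) else 0))"
      unfolding h_def using r b by (subst prod_ennreal) (auto intro!: zero_le_power less_imp_le)
    have Xnn: "0 \<le> Vfun N c1 c2 L1 L2 * grw N b L1"
      using c1 c2 b by (intro mult_nonneg_nonneg Vfun_nonneg grw_nonneg) auto
    have Pnn: "0 \<le> (\<Prod>j\<in>{1..N}. (if L2 j - L2 (j-1) \<ge> 0 then (b j * r) ^ nat (L2 j - L2 (j-1)) else 0))"
      using r b by (intro prod_nonneg) (auto intro!: zero_le_power less_imp_le)
    have real: "Vfun N c1 c2 L1 L2 * grw N b L1 * grw N b L2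
        \<le> B * (\<Prod>j\<in>{1..N}. (if L2 j - L2 (j-1) \<ge> 0 then (b j * r) ^ nat (L2 j - L2 (j-1)) else 0))"
    proof (cases "\<forall>j\<in>{1..N}. L2 (j-1) \<le> L2 j")
      case False
      then obtain j where j: "j \<in> {1..N}" "L2 j < L2 (j-1)" by auto
      have "grw N b L2 = 0" unfolding grw_def
        by (rule prod_zero) (use j in \<open>auto intro!: bexI[of _ j]\<close>)
      then show ?thesis using B Pnn by simp
    next
      case True
      have "(\<Prod>j\<in>{1..N}. (if L2 j - L2 (j-1) \<ge> 0 then (b j * r) ^ nat (L2 j - L2 (j-1)) else 0))
          = (\<Prod>j\<in>{1..N}. (b j powi (L2 j - L2 (j-1)) * ind (L2 j \<ge> L2 (j-1))) * r powi (L2 j - L2 (j-1)))"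
        using True by (intro prod.cong) (auto simp: ind_def power_int_nonneg_exp power_mult_distrib)
      also have "\<dots> = Ainc N b L2 * r powi (L2 N)"
        unfolding prod.distrib Ainc_def telescope_powi[of r, OF less_imp_neq[OF r(1), symmetric]]
        using L2 by (simp add: paths_def)
      finally have eqP: "(\<Prod>j\<in>{1..N}. (if L2 j - L2 (j-1) \<ge> 0 then (b j * r) ^ nat (L2 j - L2 (j-1)) else 0))
          = Ainc N b L2 * r powi (L2 N)" .
      have Ann: "0 \<le> Ainc N b L2"
        unfolding Ainc_def using b by (intro prod_nonneg) (auto simp: ind_def less_imp_le)
      have P1: "(\<Prod>j\<in>{1..N}. 1 - b j) \<le> 1" "0 \<le> (\<Prod>j\<in>{1..N}. 1 - b j)"
        using b by (auto intro!: prod_le_1 prod_nonneg simp: less_imp_le)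
      have "Vfun N c1 c2 L1 L2 * grw N b L1 * grw N b L2
          = (Vfun N c1 c2 L1 L2 * grw N b L1) * (\<Prod>j\<in>{1..N}. 1 - b j) * Ainc N b L2"
        by (simp add: grw_Ainc[of N b L2] mult_ac)
      also have "\<dots> \<le> (Vfun N c1 c2 L1 L2 * grw N b L1) * 1 * Ainc N b L2"
        using Xnn P1 Ann by (intro mult_right_mono mult_left_mono) auto
      also have "\<dots> \<le> (B * r powi (L2 N)) * Ainc N b L2"
        using bound[OF L2 True] Ann by (simp add: mult_right_mono)
      finally show ?thesis unfolding eqP by (simp add: mult_ac)
    qed
    show ?thesis
      unfolding hprod using B Pnn real by (simp add: ennreal_mult[symmetric])
  qed
  have "Se N b c1 c2 L1 \<le> infsum (\<lambda>L2. ennreal B * (\<Prod>j\<in>{1..N}. h j (L2 j - L2 (j-1)))) (paths N)"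
    unfolding Se_def by (rule enn_infsum_mono) (rule pt)
  also have "\<dots> = ennreal B * (\<Prod>j\<in>{1..N}. infsum (h j) UNIV)"
    unfolding enn_infsum_cmult prod_paths ..
  also have "\<dots> < \<infinity>"
  proof -
    have "infsum (h j) UNIV < \<infinity>" if "j \<in> {1..N}" for j
      unfolding h_def using r(1) r(2)[OF that] b[OF that] by (intro geo_fin) auto
    then have "(\<Prod>j\<in>{1..N}. infsum (h j) UNIV) \<noteq> top"
      unfolding ennreal_prod_eq_top by (metis infinity_ennreal_def less_irrefl)
    then show ?thesis by (simp add: ennreal_mult_less_top less_top infinity_ennreal_def)
  qed
  finally show ?thesis .
qed

end



context
  fixes N :: nat and b :: "nat \<Rightarrow> real" and c1 c2 :: real
  assumes N1: "N \<ge> 1" and b: "\<And>j. j \<in> {1..N} \<Longrightarrow> 0 < b j \<and> b j < 1"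
    and c1: "c1 > 0" and c2: "c2 > 0"
    and bc1: "\<And>j. j \<in> {1..N} \<Longrightarrow> b j * c1 < 1"
    and bc2: "\<And>j. j \<in> {1..N} \<Longrightarrow> b j * c2 < 1"
    and q: "c1 * c2 < 1"
begin

lemma Se_fin:
  assumes L1: "L1 \<in> paths N"
  shows "Se N b c1 c2 L1 < \<infinity>"
proof (cases "c2 \<ge> 1")
  case True
  show ?thesis
  proof (rule Se_fin_aux[OF N1 b c1 c2 bc1 bc2 q, where r="1::real" and B="c2 powi (L1 N) * grw N b L1"])
    show "b j * 1 < 1" if "j \<in> {1..N}" for j using b[OF that] by simp
    show "0 \<le> c2 powi (L1 N) * grw N b L1" using c2 b by (intro mult_nonneg_nonneg grw_nonneg) auto
    fix L2 assume L2: "L2 \<in> paths N" and mono: "\<forall>j\<in>{1..N}. L2 (j-1) \<le> L2 j"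
    have L20: "L2 0 = 0" and L10: "L1 0 = 0" using L1 L2 by (auto simp: paths_def)
    have "L2 1 - L1 0 \<le> Mx N L1 L2" using Mx_ge[of 1 N L2 L1] N1 by simp
    moreover have "L2 1 \<ge> 0" using mono_nonneg[OF L20 mono, of 1] N1 by simp
    ultimately have M0: "Mx N L1 L2 \<ge> 0" using L10 by simp
    have L2N: "L2 N \<ge> 0" using mono_nonneg[OF L20 mono, of N] by simp
    have "Vfun N c1 c2 L1 L2 = (c1*c2) powi (Mx N L1 L2) * c2 powi (L1 N - L2 N)"
      unfolding Vfun_def Mx_def ..
    also have "\<dots> \<le> 1 * c2 powi (L1 N)"
      using c1 c2 q M0 L2N True
      by (intro mult_mono power_int_le_one power_int_increasing) auto
    finally have "Vfun N c1 c2 L1 L2 \<le> c2 powi (L1 N)" by simp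
    then show "Vfun N c1 c2 L1 L2 * grw N b L1 \<le> c2 powi (L1 N) * grw N b L1 * 1 powi (L2 N)"
      using grw_nonneg[of N b L1] b by (simp add: mult_right_mono)
  qed auto
next
  case False
  show ?thesis
  proof (rule Se_fin_aux[OF N1 b c1 c2 bc1 bc2 q, where r=c1 and B="(c1*c2) powi (- L1 (N-1)) * c2 powi (L1 N) * grw N b L1"])
    show "0 \<le> (c1*c2) powi (- L1 (N-1)) * c2 powi (L1 N) * grw N b L1"
      using c1 c2 b by (intro mult_nonneg_nonneg grw_nonneg) auto
    fix L2 assume L2: "L2 \<in> paths N" and mono: "\<forall>j\<in>{1..N}. L2 (j-1) \<le> L2 j"
    have ge: "L2 N - L1 (N-1) \<le> Mx N L1 L2" using Mx_ge[of N N L2 L1] N1 by simp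
    have "Vfun N c1 c2 L1 L2 = (c1*c2) powi (Mx N L1 L2) * c2 powi (L1 N - L2 N)"
      unfolding Vfun_def Mx_def ..
    also have "\<dots> \<le> (c1*c2) powi (L2 N - L1 (N-1)) * c2 powi (L1 N - L2 N)"
      using c1 c2 q ge
      by (intro mult_right_mono power_int_decreasing) auto
    also have "\<dots> = (c1*c2) powi (- L1 (N-1)) * c2 powi (L1 N) * c1 powi (L2 N)"
      using c1 c2 by (simp add: power_int_diff power_int_mult_distrib power_int_minus field_simps)
    finally have "Vfun N c1 c2 L1 L2 \<le> (c1*c2) powi (- L1 (N-1)) * c2 powi (L1 N) * c1 powi (L2 N)" .
    then show "Vfun N c1 c2 L1 L2 * grw N b L1 \<le> (c1*c2) powi (- L1 (N-1)) * c2 powi (L1 N) * grw N b L1 * c1 powi (L2 N)"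
      using grw_nonneg[of N b L1] b mult_right_mono by (fastforce simp: mult_ac)
  qed (use c1 bc1 in auto)
qed

lemma main_eq:
  assumes L: "L \<in> paths N"
  shows "PP N b c1 c2 x0 L = PstatGeo N b c1 c2 L"
proof -
  define K where "K = (\<Prod>j\<in>{1..N}. 1 - b j)^2"
  have Kpos: "K > 0" unfolding K_def using b
    by (metis (no_types, lifting) diff_gt_0_iff_gt prod_pos zero_less_power)
  define C where "C = ennreal (1/K) * Gq (c1*c2)"
  define c where "c = enn2real C"
  have G: "Gq (c1*c2) < \<infinity>" "1 \<le> Gq (c1*c2)" using Gq_pos_fin[of "c1*c2"] c1 c2 q by auto
  have C_eq: "C = ennreal c"
    unfolding c_def C_def using G by (auto simp: ennreal_mult_eq_top_iff ennreal_enn2real_if)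
  have c_eq: "c = (1/K) * enn2real (Gq (c1*c2))"
    unfolding c_def C_def using Kpos by (simp add: enn2real_mult)
  have "1 \<le> enn2real (Gq (c1*c2))"
    using G enn2real_mono[of 1 "Gq (c1*c2)"] by simp
  then have cpos: "c > 0" unfolding c_eq using Kpos by simp
  have Sfin: "Se N b c1 c2 L1 \<noteq> \<infinity>" if "L1 \<in> paths N" for L1
    using Se_fin[OF that] by simp
  have wtP_eq: "wtP N b c1 c2 (shiftv N x0 L1) = c * enn2real (Se N b c1 c2 L1)" if L1: "L1 \<in> paths N" for L1
  proof -
    have "wtP N b c1 c2 (shiftv N x0 L1) = enn2real (infsum (\<lambda>l2. ennreal (wtGP N b c1 c2 (shiftv N x0 L1) l2)) (vecs N))"
      unfolding wtP_def using b c1 c2 by (intro real_infsum_enn wtGP_nonneg) auto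
    also have "\<dots> = enn2real (C * Se N b c1 c2 L1)"
    proof -
      have "infsum (\<lambda>l2. ennreal (wtGP N b c1 c2 (shiftv N x0 L1) l2)) (vecs N) = C * Se N b c1 c2 L1"
        unfolding C_def K_def by (rule wtPe[OF N1 b c1 c2 bc1 bc2 q L1])
      then show ?thesis by simp
    qed
    also have "\<dots> = c * enn2real (Se N b c1 c2 L1)"
      unfolding C_eq using cpos by (simp add: enn2real_mult)
    finally show ?thesis .
  qed
  define T where "T = infsum (\<lambda>L1. Se N b c1 c2 L1) (paths N)"
  have Z: "Zpart N b c1 c2 x0 = c * enn2real T"
  proof -
    have "Zpart N b c1 c2 x0 = infsum (\<lambda>L1. wtP N b c1 c2 (shiftv N x0 L1)) (paths N)"
      unfolding Zpart_def using infsum_reindex_bij_betw[OF start_bij, of "wtP N b c1 c2" N x0] by simp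
    also have "\<dots> = infsum (\<lambda>L1. c * enn2real (Se N b c1 c2 L1)) (paths N)"
      by (rule infsum_cong) (rule wtP_eq)
    also have "\<dots> = c * infsum (\<lambda>L1. enn2real (Se N b c1 c2 L1)) (paths N)"
      by (rule infsum_cmult_right')
    also have "infsum (\<lambda>L1. enn2real (Se N b c1 c2 L1)) (paths N)
        = enn2real (infsum (\<lambda>L1. ennreal (enn2real (Se N b c1 c2 L1))) (paths N))"
      by (rule real_infsum_enn) simp
    also have "infsum (\<lambda>L1. ennreal (enn2real (Se N b c1 c2 L1))) (paths N) = T"
      unfolding T_def by (rule infsum_cong) (use Sfin in \<open>simp add: ennreal_enn2real_if\<close>)
    finally show ?thesis .
  qed
  have EV: "EV N b c1 c2 = enn2real T"
  proof -
    have "EV N b c1 c2 = enn2real (infsum (\<lambda>x. ennreal ((\<lambda>(L1, L2). Vfun N c1 c2 L1 L2 * grw N b L1 * grw N b L2) x)) (paths N \<times> paths N))"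
      unfolding EV_def using b c1 c2
      by (intro real_infsum_enn) (auto intro!: mult_nonneg_nonneg Vfun_nonneg grw_nonneg)
    also have "infsum (\<lambda>x. ennreal ((\<lambda>(L1, L2). Vfun N c1 c2 L1 L2 * grw N b L1 * grw N b L2) x)) (paths N \<times> paths N)
       = infsum (\<lambda>(L1, L2). ennreal (Vfun N c1 c2 L1 L2 * grw N b L1 * grw N b L2)) (paths N \<times> paths N)"
      by (rule infsum_cong) auto
    also have "\<dots> = T"
      unfolding T_def Se_def by (rule enn_Sigma)
    finally show ?thesis .
  qed
  have num: "infsum (\<lambda>L2. Vfun N c1 c2 L L2 * grw N b L * grw N b L2) (paths N) = enn2real (Se N b c1 c2 L)"
    unfolding Se_def using b c1 c2
    by (intro real_infsum_enn) (auto intro!: mult_nonneg_nonneg Vfun_nonneg grw_nonneg)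
  have sh: "(\<lambda>j. if j \<le> N then x0 + L j else 0) = shiftv N x0 L" unfolding shiftv_def ..
  show ?thesis
    unfolding PP_def PstatGeo_def sh wtP_eq[OF L] Z num EV using cpos by simp
qed

end


lemma horiz_idx:
  assumes "N \<ge> 1" "j \<in> {1..N}"
  shows "nat ((k + int j - 1) mod int N) + 1 \<in> {1..N}"
proof -
  have p: "int N > 0" using assms(1) by simp
  have "(k + int j - 1) mod int N < int N" using pos_mod_bound[OF p] .
  then have "nat ((k + int j - 1) mod int N) < N" using p by (simp add: nat_less_iff)
  then show ?thesis by simp
qed

lemma horiz_val:
  assumes "N \<ge> 1" "j \<in> {1..N}"
  shows "\<exists>i\<in>{1..N}. horizLabels N a k j = a i"
  unfolding horizLabels_def using horiz_idx[OF assms] by blast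

theorem proposition2p17:
  fixes N :: nat and a :: "nat \<Rightarrow> real" and c1 c2 :: real
  assumes "N \<ge> 1"
    and "\<forall>i\<in>{1..N}. 0 < a i \<and> a i < 1"
    and "c1 > 0" and "c2 > 0"
    and "\<forall>i\<in>{1..N}. \<forall>j\<in>{1..N}. a i * a j < 1"
    and "\<forall>i\<in>{1..N}. a i * c1 < 1"
    and "\<forall>i\<in>{1..N}. a i * c2 < 1"
    and "c1 * c2 < 1"
  shows "\<forall>k::int. \<forall>x0::int. \<forall>L\<in>paths N.
           PP N (horizLabels N a k) c1 c2 x0 L = PstatGeo N (horizLabels N a k) c1 c2 L"
proof (intro allI ballI)
  fix k x0 :: int and L assume L: "L \<in> paths N"
  have hb: "0 < horizLabels N a k j \<and> horizLabels N a k j < 1" if jN: "j \<in> {1..N}" for j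
  proof -
    obtain i where "i \<in> {1..N}" "horizLabels N a k j = a i" using horiz_val[OF assms(1) jN, where a=a and k=k] by blast
    then show ?thesis using assms(2) by simp
  qed
  have hb1: "horizLabels N a k j * c1 < 1" if jN: "j \<in> {1..N}" for j
  proof -
    obtain i where "i \<in> {1..N}" "horizLabels N a k j = a i" using horiz_val[OF assms(1) jN, where a=a and k=k] by blast
    then show ?thesis using assms(6) by simp
  qed
  have hb2: "horizLabels N a k j * c2 < 1" if jN: "j \<in> {1..N}" for j
  proof -
    obtain i where "i \<in> {1..N}" "horizLabels N a k j = a i" using horiz_val[OF assms(1) jN, where a=a and k=k] by blast
    then show ?thesis using assms(7) by simp
  qed
  show "PP N (horizLabels N a k) c1 c2 x0 L = PstatGeo N (horizLabels N a k) c1 c2 L"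
    by (rule main_eq[OF assms(1) hb assms(3) assms(4) hb1 hb2 assms(8) L])
qed


end
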